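(* Let $\mathcal{H}$ be a complex linear space with a non-degenerate indefinite inner product $[\cdot,\cdot]$, and $\mathcal{F}_{++}=\{f\in\mathcal{H}:[f,f]>0\}$. Let $\{W(t):t\ge0\}$ be a family of linear operators on $\mathcal{H}$ with $W(0)=I$ and $W(t_1+t_2)=W(t_1)W(t_2)=W(t_2)W(t_1)$ for all $t_1,t_2\ge0$, such that each $W(t)$ maps $\mathcal{F}_{++}$ onto $\mathcal{F}_{++}$ in a one-to-one manner. For $t\ge0$ put $$\theta(t)=\inf_{f\in\mathcal{F}_{++}}\frac{[W(t)f,W(t)f]}{[f,f]}.$$ If for some $f\in\mathcal{F}_{++}$ the function $r(t)=[W(t)f,W(t)f]$ is continuous on $[0,\infty)$, then there exists $\alpha\in\mathbb{R}$ such that $\theta(t)=e^{\alpha t}$ for all $t\ge0$.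
   Context: An indefinite inner product is a Hermitian sesquilinear form $[\cdot,\cdot]$ on $\mathcal{H}$ (linear in the second argument) admitting vectors of strictly positive and strictly negative square; non-degenerate means $[f,g]=0$ for all $g$ forces $f=0$. *)

theory Defs
  imports Complex_Main
begin

text \<open>A complex linear space is represented by an abelian group type 'v together with a
scalar multiplication scale :: complex => 'v => 'v satisfying the vector space axioms.\<close>

definition hermitian_sesquilinear :: "(complex \<Rightarrow> 'v::ab_group_add \<Rightarrow> 'v) \<Rightarrow> ('v \<Rightarrow> 'v \<Rightarrow> complex) \<Rightarrow> bool" where
  "hermitian_sesquilinear scale ip \<longleftrightarrow>
     (\<forall>f g h. ip f (g + h) = ip f g + ip f h) \<and>
     (\<forall>f g c. ip f (scale c g) = c * ip f g) \<and>
     (\<forall>f g. ip g f = cnj (ip f g))"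

text \<open>Indefinite inner product: Hermitian sesquilinear form with vectors of strictly positive
and strictly negative square (squares are real by Hermitian symmetry).\<close>
definition indefinite_inner_product :: "(complex \<Rightarrow> 'v::ab_group_add \<Rightarrow> 'v) \<Rightarrow> ('v \<Rightarrow> 'v \<Rightarrow> complex) \<Rightarrow> bool" where
  "indefinite_inner_product scale ip \<longleftrightarrow>
     hermitian_sesquilinear scale ip \<and>
     (\<exists>f. Re (ip f f) > 0) \<and> (\<exists>g. Re (ip g g) < 0)"

definition non_degenerate :: "('v::zero \<Rightarrow> 'v \<Rightarrow> complex) \<Rightarrow> bool" where
  "non_degenerate ip \<longleftrightarrow> (\<forall>f. (\<forall>g. ip f g = 0) \<longrightarrow> f = 0)"

definition pos_vectors :: "('v \<Rightarrow> 'v \<Rightarrow> complex) \<Rightarrow> 'v set" where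
  "pos_vectors ip = {f. Re (ip f f) > 0}"

definition theta :: "('v \<Rightarrow> 'v \<Rightarrow> complex) \<Rightarrow> (real \<Rightarrow> 'v \<Rightarrow> 'v) \<Rightarrow> real \<Rightarrow> real" where
  "theta ip W t = (INF f\<in>pos_vectors ip. Re (ip (W t f) (W t f)) / Re (ip f f))"

end

theory Submission
  imports Defs "HOL-Analysis.Analysis"
begin

lemma quad_sign:
  fixes a b d a' b' d' :: real
  assumes a: "a > 0" and d: "d < 0"
    and eq: "\<And>s. (a* s^2+b* s+d > 0) = (a'* s^2+b'* s+d' > 0)"
  shows "a'*d = a*d'"
proof -
  define e where "e = sqrt (b^2 - 4*a*d)"
  have D: "b^2 - 4*a*d > 0" using a d by (smt (verit) mult_pos_neg zero_le_power2)
  have e2: "e^2 = b^2 - 4*a*d" unfolding e_def using D by simp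
  have epos: "e > 0" unfolding e_def using D by simp
  define r1 where "r1 = (-b-e)/(2*a)"
  define r2 where "r2 = (-b+e)/(2*a)"
  have r12: "r1 < r2" unfolding r1_def r2_def using a epos by (simp add: divide_strict_right_mono)
  have v: "a* s^2+b* s+d = a*(s-r1)*(s-r2)" for s
    unfolding r1_def r2_def using a e2 by (simp add: field_simps power2_eq_square) (metis distrib_left)
  have prod: "d = a*r1*r2" using v[of 0] by simp
  let ?u = "\<lambda>s. a'* s^2+b'* s+d'"
  have cont: "(?u \<longlongrightarrow> ?u r) (at r within S)" for r S by (intro tendsto_intros)
  have u1le: "?u r1 \<le> 0" using eq[of r1] v[of r1] by auto
  have u2le: "?u r2 \<le> 0" using eq[of r2] v[of r2] by auto
  have u1ge: "?u r1 \<ge> 0"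
  proof (rule tendsto_lowerbound[OF cont[of r1 "{..<r1}"]])
    show "\<forall>\<^sub>F s in at_left r1. 0 \<le> ?u s"
      using eventually_at_left_real[of "r1 - 1" r1, simplified]
    proof (rule eventually_mono)
      fix s assume "r1 - 1 < s \<and> s < r1"
      then have "(s-r1)*(s-r2) > 0" using r12 by (intro mult_neg_neg) auto
      then have "a*(s-r1)*(s-r2) > 0" using a by (simp add: mult.assoc)
      then show "0 \<le> ?u s" using eq[of s] v[of s] by auto
    qed
  qed simp
  have u2ge: "?u r2 \<ge> 0"
  proof (rule tendsto_lowerbound[OF cont[of r2 "{r2<..}"]])
    show "\<forall>\<^sub>F s in at_right r2. 0 \<le> ?u s"
      using eventually_at_right_real[of r2 "r2 + 1", simplified]
    proof (rule eventually_mono)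
      fix s assume "r2 < s \<and> s < r2 + 1"
      then have "(s-r1)*(s-r2) > 0" using r12 by (intro mult_pos_pos) auto
      then have "a*(s-r1)*(s-r2) > 0" using a by (simp add: mult.assoc)
      then show "0 \<le> ?u s" using eq[of s] v[of s] by auto
    qed
  qed simp
  have z1: "?u r1 = 0" and z2: "?u r2 = 0" using u1le u1ge u2le u2ge by auto
  have "?u r1 - ?u r2 = (r1 - r2) * (a'*(r1+r2) + b')" by (simp add: algebra_simps power2_eq_square)
  then have sb: "a'*(r1+r2) + b' = 0" using z1 z2 r12 by simp
  have b': "b' = - a'*(r1+r2)" using sb by linarith
  have "d' = - a'*r1^2 - b'*r1" using z1 by simp
  also have "\<dots> = a'*r1*r2" unfolding b' by (simp add: algebra_simps power2_eq_square)
  finally have "d' = a'*r1*r2" .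
  then show ?thesis using prod by simp
qed

lemma prop_forms:
  fixes q p :: "'v \<Rightarrow> real" and cmb :: "'v \<Rightarrow> real \<Rightarrow> 'v \<Rightarrow> 'v"
  assumes qe: "\<And>x y. \<exists>\<beta>. \<forall>s. q (cmb y s x) = q x * s^2 + \<beta> * s + q y"
    and pe: "\<And>x y. \<exists>\<beta>. \<forall>s. p (cmb y s x) = p x * s^2 + \<beta> * s + p y"
    and sgn: "\<And>z. q z > 0 \<longleftrightarrow> p z > 0"
    and neg: "q zn < 0" and pos: "q x0 > 0"
  shows "\<exists>c>0. \<forall>y. p y = c * q y"
proof -
  define c where "c = p x0 / q x0"
  have px0: "p x0 > 0" using sgn pos by blast
  have c: "c > 0" unfolding c_def using px0 pos by simp
  have pc: "p x0 = c * q x0" unfolding c_def using pos by simp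
  have h1: "p y = c * q y" if y: "q y < 0" for y
  proof -
    obtain \<beta> where b: "\<forall>s. q (cmb y s x0) = q x0 * s^2 + \<beta> * s + q y" using qe by blast
    obtain \<beta>' where b': "\<forall>s. p (cmb y s x0) = p x0 * s^2 + \<beta>' * s + p y" using pe by blast
    have "p x0 * q y = q x0 * p y"
      by (rule quad_sign[OF pos y, where b=\<beta> and b'=\<beta>']) (metis b b' sgn)
    then show ?thesis unfolding c_def using pos by (simp add: field_simps)
  qed
  have h2: "p y = c * q y" if y: "q y > 0" for y
  proof -
    obtain \<beta> where b: "\<forall>s. q (cmb zn s y) = q y * s^2 + \<beta> * s + q zn" using qe by blast
    obtain \<beta>' where b': "\<forall>s. p (cmb zn s y) = p y * s^2 + \<beta>' * s + p zn" using pe by blast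
    have "p y * q zn = q y * p zn"
      by (rule quad_sign[OF y neg, where b=\<beta> and b'=\<beta>']) (metis b b' sgn)
    also have "\<dots> = q y * c * q zn" using h1[OF neg] by simp
    finally show ?thesis using neg by simp
  qed
  have "p y = c * q y" for y
  proof (cases "q y = 0")
    case False
    then show ?thesis using h1 h2 by (cases "q y < 0") auto
  next
    case True
    obtain \<beta> where b: "\<forall>s. q (cmb y s x0) = q x0 * s^2 + \<beta> * s + q y" using qe by blast
    obtain \<beta>' where b': "\<forall>s. p (cmb y s x0) = p x0 * s^2 + \<beta>' * s + p y" using pe by blast
    have e: "\<beta>' * s + p y = c * \<beta> * s" if s: "s > \<bar>\<beta>\<bar> / q x0" for s
    proof -
      have s0: "s > 0" using s pos by (smt (verit) divide_nonneg_pos)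
      have "q x0 * s > \<bar>\<beta>\<bar>" using s pos by (simp add: field_simps)
      then have "q x0 * s + \<beta> > 0" by linarith
      then have "s * (q x0 * s + \<beta>) > 0" using s0 by simp
      then have "q (cmb y s x0) > 0" using b True by (simp add: algebra_simps power2_eq_square)
      then have "p (cmb y s x0) = c * q (cmb y s x0)" using h2 by blast
      then show ?thesis using b b' True pc by (simp add: algebra_simps)
    qed
    define s1 where "s1 = \<bar>\<beta>\<bar> / q x0 + 1"
    have e1: "\<beta>' * s1 + p y = c * \<beta> * s1" by (rule e) (simp add: s1_def)
    have e2: "\<beta>' * (s1+1) + p y = c * \<beta> * (s1+1)" by (rule e) (simp add: s1_def)
    have "\<beta>' = c * \<beta>" using e1 e2 by (simp add: algebra_simps)
    then show ?thesis using e1 True by simp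
  qed
  then show ?thesis using c by blast
qed

lemma small_pos:
  fixes A \<beta> Q :: real
  assumes A: "A > 0"
  shows "\<exists>s>0. A + \<beta> * s + Q * s^2 > 0"
proof -
  define s where "s = min 1 (A / (2 * (\<bar>\<beta>\<bar> + \<bar>Q\<bar> + 1)))"
  have s0: "s > 0" unfolding s_def using A by simp
  have s1: "s \<le> 1" unfolding s_def by simp
  have s2: "s * (\<bar>\<beta>\<bar> + \<bar>Q\<bar> + 1) \<le> A / 2"
  proof -
    have "s \<le> A / (2 * (\<bar>\<beta>\<bar> + \<bar>Q\<bar> + 1))" unfolding s_def by simp
    then show ?thesis by (simp add: field_simps)
  qed
  have "\<bar>\<beta> * s\<bar> \<le> \<bar>\<beta>\<bar> * s" using s0 by (simp add: abs_mult)
  moreover have "\<bar>Q * s^2\<bar> \<le> \<bar>Q\<bar> * s"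
  proof -
    have "s^2 \<le> s" using s0 s1 by (simp add: power2_eq_square mult_le_one)
    then show ?thesis using s0 by (simp add: abs_mult mult_left_mono)
  qed
  ultimately have "\<bar>\<beta> * s + Q * s^2\<bar> \<le> A / 2" using s2 s0 abs_triangle_ineq[of "\<beta> * s" "Q * s^2"] by (simp add: algebra_simps)
  then have "-(\<beta> * s + Q * s^2) \<le> A / 2" using abs_ge_minus_self[of "\<beta> * s + Q * s^2"] by linarith
  then show ?thesis using s0 A by (intro exI[of _ s]) auto
qed

lemma exp_char:
  fixes th :: "real \<Rightarrow> real"
  assumes cont: "continuous_on {0..} th" and pos: "\<And>t. t \<ge> 0 \<Longrightarrow> th t > 0"
    and mult: "\<And>s t. s \<ge> 0 \<Longrightarrow> t \<ge> 0 \<Longrightarrow> th (s + t) = th s * th t"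
  shows "\<exists>\<alpha>. \<forall>t\<ge>0. th t = exp (\<alpha> * t)"
proof -
  define g where "g t = ln (th (max t 0))" for t
  have gadd: "g (s + t) = g s + g t" if "s \<ge> 0" "t \<ge> 0" for s t
    unfolding g_def using that mult[OF that] pos[OF that(1)] pos[OF that(2)] by (simp add: ln_mult)
  have g0: "g 0 = 0" using gadd[of 0 0] by simp
  have gn: "g (real n * t) = real n * g t" if "t \<ge> 0" for n t
  proof (induction n)
    case 0 then show ?case using g0 by simp
  next
    case (Suc n)
    have "g (real (Suc n) * t) = g (t + real n * t)" by (simp add: algebra_simps)
    also have "\<dots> = g t + g (real n * t)" using that by (intro gadd) auto
    finally show ?case using Suc by (simp add: algebra_simps)
  qed
  have grat: "g r = max r 0 * g 1" if rq: "r \<in> \<rat>" for r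
  proof (cases "r \<ge> 0")
    case False
    then show ?thesis unfolding g_def using g0 g_def by simp
  next
    case True
    obtain m n :: nat where n: "n \<noteq> 0" and r: "\<bar>r\<bar> = real m / real n" using Rats_abs_nat_div_natE[OF rq] by blast
    have r': "r = real m / real n" using r True by simp
    have "real n * g r = g (real n * r)" using True by (simp add: gn)
    also have "real n * r = real m * 1" using n r' by simp
    also have "g (real m * 1) = real m * g 1" by (rule gn) simp
    finally have "g r = real m / real n * g 1" using n by (simp add: field_simps)
    then show ?thesis using r' True by simp
  qed
  have cg: "continuous_on UNIV g"
  proof -
    have "continuous_on UNIV (\<lambda>t. th (max t 0))"
      by (rule continuous_on_compose2[OF cont]) (auto intro!: continuous_intros)
    moreover have "th (max t 0) \<noteq> 0" for t using pos[of "max t 0"] by simp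
    ultimately show ?thesis unfolding g_def
      by (intro continuous_on_ln) auto
  qed
  have cl: "closed {x. g x = max x 0 * g 1}"
    by (rule closed_Collect_eq[OF cg]) (auto intro!: continuous_intros)
  have all: "g x = max x 0 * g 1" for x
  proof -
    have "x \<in> {x. g x = max x 0 * g 1}"
    proof (rule closed_approachable[OF cl, THEN iffD1], intro allI impI)
      fix e :: real assume "e > 0"
      then obtain r where r: "r \<in> \<rat>" "x < r" "r < x + e" using Rats_dense_in_real[of x "x + e"] by auto
      have "r \<in> {x. g x = max x 0 * g 1}" using grat[OF r(1)] by simp
      moreover have "dist r x < e" using r(2,3) by (simp add: dist_real_def)
      ultimately show "\<exists>y\<in>{x. g x = max x 0 * g 1}. dist y x < e" by blast
    qed
    then show ?thesis by simp
  qed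
  show ?thesis
  proof (intro exI allI impI)
    fix t :: real assume t: "t \<ge> 0"
    have "th t = exp (g t)" unfolding g_def using pos[OF t] t by simp
    then show "th t = exp (g 1 * t)" using all[of t] t by (simp add: mult.commute)
  qed
qed


lemma herm_expand:
  fixes scale :: "complex \<Rightarrow> 'v::ab_group_add \<Rightarrow> 'v" and ip :: "'v \<Rightarrow> 'v \<Rightarrow> complex"
  assumes H: "hermitian_sesquilinear scale ip"
  shows "Re (ip (y + scale (complex_of_real s) x) (y + scale (complex_of_real s) x))
         = Re (ip x x) * s^2 + Re (ip y x + ip x y) * s + Re (ip y y)"
proof -
  have add2: "ip f (g + h) = ip f g + ip f h" for f g h using H unfolding hermitian_sesquilinear_def by blast
  have sc2: "ip f (scale c g) = c * ip f g" for f g c using H unfolding hermitian_sesquilinear_def by blast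
  have hs: "ip g f = cnj (ip f g)" for f g using H unfolding hermitian_sesquilinear_def by blast
  have add1: "ip (f + g) h = ip f h + ip g h" for f g h
    by (metis add2 complex_cnj_add hs)
  have sc1: "ip (scale c f) h = cnj c * ip f h" for f h c
    by (metis sc2 complex_cnj_mult hs)
  have "ip (y + scale (complex_of_real s) x) (y + scale (complex_of_real s) x)
        = ip y y + of_real s * ip y x + of_real s * ip x y + of_real s * of_real s * ip x x"
    by (simp add: add1 add2 sc1 sc2 algebra_simps)
  then show ?thesis by (simp add: power2_eq_square algebra_simps)
qed

theorem theorem2p6:
  fixes scale :: "complex \<Rightarrow> 'v::ab_group_add \<Rightarrow> 'v"
    and ip :: "'v \<Rightarrow> 'v \<Rightarrow> complex"
    and W :: "real \<Rightarrow> 'v \<Rightarrow> 'v"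
  assumes "vector_space scale"
    and "indefinite_inner_product scale ip"
    and "non_degenerate ip"
    and "\<And>t. t \<ge> 0 \<Longrightarrow> Vector_Spaces.linear scale scale (W t)"
    and "W 0 = id"
    and "\<And>t1 t2. t1 \<ge> 0 \<Longrightarrow> t2 \<ge> 0 \<Longrightarrow>
           W (t1 + t2) = W t1 \<circ> W t2 \<and> W t1 \<circ> W t2 = W t2 \<circ> W t1"
    and "\<And>t. t \<ge> 0 \<Longrightarrow> bij_betw (W t) (pos_vectors ip) (pos_vectors ip)"
    and "\<exists>f\<in>pos_vectors ip. continuous_on {0..} (\<lambda>t. Re (ip (W t f) (W t f)))"
  shows "\<exists>\<alpha>::real. \<forall>t\<ge>0. theta ip W t = exp (\<alpha> * t)"
proof -
  note VS = assms(1)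
  have H: "hermitian_sesquilinear scale ip" using assms(2) unfolding indefinite_inner_product_def by blast
  obtain x0 where x0: "Re (ip x0 x0) > 0" using assms(2) unfolding indefinite_inner_product_def by blast
  obtain zn where zn: "Re (ip zn zn) < 0" using assms(2) unfolding indefinite_inner_product_def by blast
  define q where "q f = Re (ip f f)" for f
  have posq: "pos_vectors ip = {f. q f > 0}" unfolding pos_vectors_def q_def by simp
  have expand: "q (y + scale (complex_of_real s) x) = q x * s^2 + Re (ip y x + ip x y) * s + q y" for x y s
    unfolding q_def by (rule herm_expand[OF H])
  have key: "\<exists>c>0. \<forall>f. q (W t f) = c * q f" if t: "t \<ge> 0" for t
  proof -
    have lin: "W t (x + y) = W t x + W t y" "W t (scale c x) = scale c (W t x)" for x y c
      using assms(4)[OF t] unfolding Vector_Spaces.linear_iff by blast+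
    have bij: "bij_betw (W t) {f. q f > 0} {f. q f > 0}" using assms(7)[OF t] posq by simp
    have sgn: "q z > 0 \<longleftrightarrow> q (W t z) > 0" for z
    proof
      assume "q z > 0" then show "q (W t z) > 0" using bij_betwE[OF bij] by blast
    next
      assume "q (W t z) > 0"
      then have "W t z \<in> W t ` {f. q f > 0}" using bij_betw_imp_surj_on[OF bij] by simp
      then obtain z' where z': "q z' > 0" "W t z = W t z'" by auto
      define k where "k = z - z'"
      have zk: "z = z' + k" unfolding k_def by simp
      have Wk: "W t k = 0" using z'(2) unfolding zk lin by simp
      obtain s where s: "s > 0" "q z' + Re (ip z' k + ip k z') * s + q k * s^2 > 0"
        using small_pos[OF z'(1)] by blast
      have qs: "q (z' + scale (complex_of_real s) k) > 0" using s(2) expand by (simp add: algebra_simps)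
      have "W t (z' + scale (complex_of_real s) k) = W t z'"
        using Wk by (simp add: lin vector_space.scale_eq_0_iff[OF VS])
      then have "z' + scale (complex_of_real s) k = z'"
        using inj_onD[OF bij_betw_imp_inj_on[OF bij]] qs z'(1) by blast
      then have "k = 0" using s(1) by (simp add: vector_space.scale_eq_0_iff[OF VS])
      then show "q z > 0" using zk z'(1) by simp
    qed
    show ?thesis
    proof (rule prop_forms[where cmb = "\<lambda>y s x. y + scale (complex_of_real s) x"])
      show "\<exists>\<beta>. \<forall>s. q (y + scale (complex_of_real s) x) = q x * s^2 + \<beta> * s + q y" for x y
        using expand by blast
      show "\<exists>\<beta>. \<forall>s. q (W t (y + scale (complex_of_real s) x)) = q (W t x) * s^2 + \<beta> * s + q (W t y)" for x y
        unfolding lin using expand by blast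
      show "q z > 0 \<longleftrightarrow> q (W t z) > 0" for z by (rule sgn)
      show "q zn < 0" using zn q_def by simp
      show "q x0 > 0" using x0 q_def by simp
    qed
  qed
  have th: "theta ip W t > 0 \<and> (\<forall>f. q (W t f) = theta ip W t * q f)" if t: "t \<ge> 0" for t
  proof -
    obtain c where c: "c > 0" "\<forall>f. q (W t f) = c * q f" using key[OF t] by blast
    have "theta ip W t = (INF f\<in>pos_vectors ip. c)"
      unfolding theta_def by (rule INF_cong) (auto simp: c(2)[unfolded q_def] posq q_def)
    also have "\<dots> = c" using x0 by (subst cINF_const) (auto simp: pos_vectors_def)
    finally show ?thesis using c by simp
  qed
  have qx0: "q x0 > 0" using x0 q_def by simp
  show ?thesis
  proof (rule exp_char)
    show "theta ip W t > 0" if "t \<ge> 0" for t using th[OF that] by blast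
  next
    fix s t :: real assume st: "s \<ge> 0" "t \<ge> 0"
    have "theta ip W (s + t) * q x0 = q (W (s + t) x0)" using th st by simp
    also have "\<dots> = q (W s (W t x0))" using conjunct1[OF assms(6)[OF st]] by (metis comp_apply)
    also have "\<dots> = theta ip W s * (theta ip W t * q x0)" using th st by simp
    finally show "theta ip W (s + t) = theta ip W s * theta ip W t" using qx0 by simp
  next
    obtain f0 where f0: "f0 \<in> pos_vectors ip" "continuous_on {0..} (\<lambda>t. q (W t f0))"
      using assms(8) unfolding q_def by blast
    have qf0: "q f0 > 0" using f0(1) posq by simp
    have "continuous_on {0..} (\<lambda>t. q (W t f0) / q f0)" by (intro continuous_intros f0(2)) (use qf0 in auto)
    then show "continuous_on {0..} (theta ip W)"
      by (rule continuous_on_cong[THEN iffD1, rotated 2]) (use th qf0 in auto)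
  qed
qed

end
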